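(* Let $\mathcal{G}$ be an MVPP optional-grabbing pawn game with pawns $[d]$, let $\langle v,P\rangle$ be a configuration, let $j\in[d]$ be the pawn with $v\in V_j$, and let $P'\subseteq P$. (1) If ($j\in P$ implies $j\in P'$) and Player 1 wins from $\langle v,P\rangle$, then Player 1 wins from $\langle v,P'\rangle$. (2) If ($j\notin P'$ implies $j\notin P$) and Player 2 wins from $\langle v,P'\rangle$, then Player 2 wins from $\langle v,P\rangle$.
   Context: A pawn game with $d$ pawns consists of a finite directed graph $(V,E)$, a target set $T\subseteq V$, and sets $V_1,\dots,V_d\subseteq V$, where Pawn $j$ owns the vertices in $V_j$. In an MVPP (multiple vertices per pawn) game, $V_1,\dots,V_d$ form a partition of $V$. A configuration is a pair $\langle v,P\rangle$ with $v\in V$ the token position and $P\subseteq[d]$ the set of pawns controlled by Player 1 (Player 2 controls the rest). At $\langle v,P\rangle$, Player 1 moves the token iff he controls the pawn owning $v$; otherwise Player 2 moves. The mover moves the token to some $u$ with $(v,u)\in E$. Under optional grabbing, after Player $i$ moves, the other player may either leave pawn control unchanged or take one pawn currently controlled by Player $i$ into his own control. Player 1 wins a play iff it visits $T$; otherwise Player 2 wins. A player wins from a configuration if he has a strategy winning against all opponent strategies. *)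

theory Defs
  imports Main
begin

text \<open>MVPP pawn games with optional grabbing.  Pawns are 1..d.  Since in an MVPP
game the sets V_1..V_d partition V, the game is given by the owner function
own: own v = j iff v is in V_j.\<close>

record 'v pawn_game =
  V :: "'v set"
  E :: "('v \<times> 'v) set"
  T :: "'v set"
  d :: nat
  own :: "'v \<Rightarrow> nat"

type_synonym 'v config = "'v \<times> nat set"

definition mvpp_game :: "'v pawn_game \<Rightarrow> bool" where
  "mvpp_game G \<longleftrightarrow> finite (V G) \<and> E G \<subseteq> V G \<times> V G \<and> T G \<subseteq> V G
     \<and> (\<forall>v\<in>V G. own G v \<in> {1..d G})
     \<and> (\<forall>v\<in>V G. \<exists>u. (v,u) \<in> E G)"

text \<open>A strategy (for either player) consists of a move function (history to next vertex),
used when the player is the mover, and a grab function (history and the vertex just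
moved to, giving the new set of Player-1 pawns), used when the opponent was the mover.\<close>

type_synonym 'v strategy = "('v config list \<Rightarrow> 'v) \<times> ('v config list \<Rightarrow> 'v \<Rightarrow> nat set)"

definition legal1 :: "'v pawn_game \<Rightarrow> 'v strategy \<Rightarrow> bool" where
  "legal1 G s \<longleftrightarrow> (\<forall>h v P. h \<noteq> [] \<longrightarrow> last h = (v,P) \<longrightarrow> v \<in> V G \<longrightarrow>
      (own G v \<in> P \<longrightarrow> (v, fst s h) \<in> E G) \<and>
      (own G v \<notin> P \<longrightarrow> (\<forall>u. snd s h u = P \<or> (\<exists>k\<in>{1..d G} - P. snd s h u = insert k P))))"

definition legal2 :: "'v pawn_game \<Rightarrow> 'v strategy \<Rightarrow> bool" where
  "legal2 G s \<longleftrightarrow> (\<forall>h v P. h \<noteq> [] \<longrightarrow> last h = (v,P) \<longrightarrow> v \<in> V G \<longrightarrow>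
      (own G v \<notin> P \<longrightarrow> (v, fst s h) \<in> E G) \<and>
      (own G v \<in> P \<longrightarrow> (\<forall>u. snd s h u = P \<or> (\<exists>k\<in>P. snd s h u = P - {k}))))"

definition step :: "'v pawn_game \<Rightarrow> 'v strategy \<Rightarrow> 'v strategy \<Rightarrow> 'v config list \<Rightarrow> 'v config" where
  "step G s1 s2 h = (let (v,P) = last h in
     if own G v \<in> P then (let u = fst s1 h in (u, snd s2 h u))
     else (let u = fst s2 h in (u, snd s1 h u)))"

fun hist :: "'v pawn_game \<Rightarrow> 'v strategy \<Rightarrow> 'v strategy \<Rightarrow> 'v config \<Rightarrow> nat \<Rightarrow> 'v config list" where
  "hist G s1 s2 c 0 = [c]"
| "hist G s1 s2 c (Suc n) = hist G s1 s2 c n @ [step G s1 s2 (hist G s1 s2 c n)]"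

definition play :: "'v pawn_game \<Rightarrow> 'v strategy \<Rightarrow> 'v strategy \<Rightarrow> 'v config \<Rightarrow> nat \<Rightarrow> 'v config" where
  "play G s1 s2 c n = last (hist G s1 s2 c n)"

definition wins1 :: "'v pawn_game \<Rightarrow> 'v config \<Rightarrow> bool" where
  "wins1 G c \<longleftrightarrow> (\<exists>s1. legal1 G s1 \<and> (\<forall>s2. legal2 G s2 \<longrightarrow> (\<exists>n. fst (play G s1 s2 c n) \<in> T G)))"

definition wins2 :: "'v pawn_game \<Rightarrow> 'v config \<Rightarrow> bool" where
  "wins2 G c \<longleftrightarrow> (\<exists>s2. legal2 G s2 \<and> (\<forall>s1. legal1 G s1 \<longrightarrow> (\<forall>n. fst (play G s1 s2 c n) \<notin> T G)))"

end

theory Submission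
  imports Defs
begin

fun trn :: "('v config list \<Rightarrow> 'v config \<Rightarrow> 'v config \<Rightarrow> 'v config) \<Rightarrow> 'v config \<Rightarrow> 'v config list \<Rightarrow> nat \<Rightarrow> 'v config list" where
  "trn nx c0 h 0 = [c0]"
| "trn nx c0 h (Suc i) = trn nx c0 h i @ [nx (trn nx c0 h i) (h!i) (h!Suc i)]"

definition tr :: "('v config list \<Rightarrow> 'v config \<Rightarrow> 'v config \<Rightarrow> 'v config) \<Rightarrow> 'v config \<Rightarrow> 'v config list \<Rightarrow> 'v config list" where
  "tr nx c0 h = trn nx c0 h (length h - 1)"

lemma trn_append: "i < length h \<Longrightarrow> trn nx c0 (h @ [c]) i = trn nx c0 h i"
  by (induction i) (auto simp: nth_append)

lemma tr_snoc: "h \<noteq> [] \<Longrightarrow> tr nx c0 (h @ [c]) = tr nx c0 h @ [nx (tr nx c0 h) (last h) c]"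
proof -
  assume hne: "h \<noteq> []"
  then obtain m where m: "length h = Suc m" by (cases h) auto
  have a: "(h@[c])!m = last h" using m hne by (simp add: nth_append last_conv_nth)
  have b: "(h@[c])!Suc m = c" using m by (simp add: nth_append)
  show ?thesis using trn_append[of m h nx c0 c] m a b by (simp add: tr_def)
qed

lemma tr_single: "tr nx c0 [c] = [c0]"
  by (simp add: tr_def)

lemma length_trn: "length (trn nx c0 h i) = Suc i" by (induction i) auto

lemma tr_ne: "tr nx c0 h \<noteq> []"
  unfolding tr_def by (metis length_trn list.size(3) nat.distinct(1))

lemma length_hist: "length (hist G s1 s2 c n) = Suc n" by (induction n) auto

lemma hist_ne: "hist G s1 s2 c n \<noteq> []" by (cases n) auto

lemma step_eq: "last h = (u,Q) \<Longrightarrow> step G s1 s2 h =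
   (if own G u \<in> Q then (fst s1 h, snd s2 h (fst s1 h)) else (fst s2 h, snd s1 h (fst s2 h)))"
  by (simp add: step_def Let_def)

definition nxt1 :: "'v pawn_game \<Rightarrow> 'v strategy \<Rightarrow> 'v config list \<Rightarrow> 'v config \<Rightarrow> 'v config \<Rightarrow> 'v config" where
  "nxt1 G s1 hs c c' = (if own G (fst (last hs)) \<in> snd (last hs)
     then (fst c', if own G (fst c') \<in> snd (last hs) \<and> own G (fst c') \<notin> snd c'
                   then snd (last hs) - {own G (fst c')} else snd (last hs) - (snd c - snd c'))
     else (fst c', snd s1 hs (fst c')))"


lemma legal1_move: "legal1 G s \<Longrightarrow> h \<noteq> [] \<Longrightarrow> last h = (v,P) \<Longrightarrow> v \<in> V G \<Longrightarrow> own G v \<in> P \<Longrightarrow> (v, fst s h) \<in> E G"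
  unfolding legal1_def by blast
lemma legal1_grab: "legal1 G s \<Longrightarrow> h \<noteq> [] \<Longrightarrow> last h = (v,P) \<Longrightarrow> v \<in> V G \<Longrightarrow> own G v \<notin> P \<Longrightarrow> snd s h u = P \<or> (\<exists>k\<in>{1..d G} - P. snd s h u = insert k P)"
  unfolding legal1_def by blast
lemma legal2_move: "legal2 G s \<Longrightarrow> h \<noteq> [] \<Longrightarrow> last h = (v,P) \<Longrightarrow> v \<in> V G \<Longrightarrow> own G v \<notin> P \<Longrightarrow> (v, fst s h) \<in> E G"
  unfolding legal2_def by blast
lemma legal2_grab: "legal2 G s \<Longrightarrow> h \<noteq> [] \<Longrightarrow> last h = (v,P) \<Longrightarrow> v \<in> V G \<Longrightarrow> own G v \<in> P \<Longrightarrow> snd s h u = P \<or> (\<exists>k\<in>P. snd s h u = P - {k})"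
  unfolding legal2_def by blast

lemma part1:
  fixes G :: "'v pawn_game"
  assumes mv: "mvpp_game G" and vV: "v \<in> V G" and sub: "P' \<subseteq> P"
    and mov: "own G v \<in> P \<longleftrightarrow> own G v \<in> P'" and w: "wins1 G (v,P)"
  shows "wins1 G (v,P')"
proof -
  from w obtain s1 where l1: "legal1 G s1"
    and win: "\<forall>s2. legal2 G s2 \<longrightarrow> (\<exists>n. fst (play G s1 s2 (v,P) n) \<in> T G)"
    by (auto simp: wins1_def)
  have EV: "\<And>a b. (a,b) \<in> E G \<Longrightarrow> b \<in> V G" using mv by (auto simp: mvpp_game_def)
  have succ: "\<And>a. a \<in> V G \<Longrightarrow> \<exists>b. (a,b) \<in> E G" using mv by (auto simp: mvpp_game_def)
  have rng: "\<And>a. a \<in> V G \<Longrightarrow> own G a \<in> {1..d G}" using mv by (auto simp: mvpp_game_def)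
  define nx where "nx = nxt1 G s1"
  define c0 where "c0 = (v,P)"
  define s1' :: "'v strategy" where "s1' = ((\<lambda>h. if (fst (last h), fst s1 (tr nx c0 h)) \<in> E G then fst s1 (tr nx c0 h)
        else (SOME w. (fst (last h), w) \<in> E G)),
     (\<lambda>h u'. if own G u' \<in> snd s1 (tr nx c0 h) u' \<and> own G u' \<notin> snd (last h) \<and> own G u' \<in> {1..d G}
        then insert (own G u') (snd (last h)) else snd (last h)))"
  have l1': "legal1 G s1'"
    unfolding legal1_def
  proof (intro allI impI conjI)
    fix h v P assume "h \<noteq> []" "last h = (v,P)" "v \<in> V G" "own G v \<in> P"
    then show "(v, fst s1' h) \<in> E G" unfolding s1'_def using succ[of v]
      by (auto intro: someI_ex)
  next
    fix h v P u assume "h \<noteq> []" "last h = (v,P)" "v \<in> V G" "own G v \<notin> P"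
    then show "snd s1' h u = P \<or> (\<exists>k\<in>{1..d G} - P. snd s1' h u = insert k P)"
      unfolding s1'_def by auto
  qed
  show ?thesis unfolding wins1_def
  proof (rule exI[of _ s1'], intro conjI allI impI)
    show "legal1 G s1'" by fact
    fix s2 assume l2: "legal2 G s2"
    define HR where "HR n = hist G s1' s2 (v,P') n" for n
    define s2'' :: "'v strategy" where "s2'' = ((\<lambda>hs. if (fst (last hs), fst (last (HR (length hs)))) \<in> E G
           then fst (last (HR (length hs))) else (SOME w. (fst (last hs), w) \<in> E G)),
       (\<lambda>hs u'. if snd (last (tr nx c0 (HR (length hs)))) = snd (last hs) \<or>
            (\<exists>k\<in>snd (last hs). snd (last (tr nx c0 (HR (length hs)))) = snd (last hs) - {k})
          then snd (last (tr nx c0 (HR (length hs)))) else snd (last hs)))"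
    have l2'': "legal2 G s2''"
      unfolding legal2_def
    proof (intro allI impI conjI)
      fix h v P assume "h \<noteq> []" "last h = (v,P)" "v \<in> V G" "own G v \<notin> P"
      then show "(v, fst s2'' h) \<in> E G" unfolding s2''_def using succ[of v]
        by (auto intro: someI_ex)
    next
      fix h v P u assume "h \<noteq> []" "last h = (v,P)" "v \<in> V G" "own G v \<in> P"
      then show "snd s2'' h u = P \<or> (\<exists>k\<in>P. snd s2'' h u = P - {k})"
        unfolding s2''_def by auto
    qed
    have inv: "hist G s1 s2'' c0 n = tr nx c0 (HR n) \<and>
       fst (last (tr nx c0 (HR n))) = fst (last (HR n)) \<and> fst (last (HR n)) \<in> V G \<and>
       snd (last (HR n)) \<subseteq> snd (last (tr nx c0 (HR n))) \<and>
       (own G (fst (last (HR n))) \<in> snd (last (tr nx c0 (HR n))) \<longleftrightarrow> own G (fst (last (HR n))) \<in> snd (last (HR n)))" for n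
    proof (induction n)
      case 0
      then show ?case using vV sub mov by (simp add: HR_def tr_single c0_def)
    next
      case (Suc n)
      define hs where "hs = tr nx c0 (HR n)"
      obtain u Q' where RQ: "last (HR n) = (u,Q')" by fastforce
      obtain x Q where SQ: "last hs = (x,Q)" by fastforce
      have hsne: "hs \<noteq> []" unfolding hs_def by (rule tr_ne)
      have HRne: "HR n \<noteq> []" unfolding HR_def by (rule hist_ne)
      have lenhs: "length hs = Suc n" unfolding hs_def tr_def
        by (simp add: length_trn HR_def length_hist)
      have IH: "hist G s1 s2'' c0 n = hs" "x = u" "u \<in> V G" "Q' \<subseteq> Q" "own G u \<in> Q \<longleftrightarrow> own G u \<in> Q'"
        using Suc.IH RQ SQ by (auto simp: hs_def)
      define c' where "c' = step G s1' s2 (HR n)"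
      have HRs: "HR (Suc n) = HR n @ [c']" by (simp add: HR_def c'_def)
      have trs: "tr nx c0 (HR (Suc n)) = hs @ [nx hs (u,Q') c']"
        using tr_snoc[OF HRne] RQ by (simp add: HRs hs_def)
      have hists: "hist G s1 s2'' c0 (Suc n) = hs @ [step G s1 s2'' hs]" using IH(1) by simp
      show ?case
      proof (cases "own G u \<in> Q")
        case True
        have edge: "(u, fst s1 hs) \<in> E G" using legal1_move[OF l1 hsne] SQ IH True by simp
        define u' where "u' = fst s1 hs"
        define Qn' where "Qn' = snd s2 (HR n) u'"
        have c'e: "c' = (u', Qn')" unfolding c'_def u'_def Qn'_def
          using step_eq[OF RQ] True IH edge by (simp add: s1'_def RQ hs_def)
        have gr: "Qn' = Q' \<or> (\<exists>k\<in>Q'. Qn' = Q' - {k})"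
          using legal2_grab[OF l2 HRne RQ IH(3)] IH True unfolding Qn'_def by simp
        define Qn where "Qn = (if own G u' \<in> Q \<and> own G u' \<notin> Qn' then Q - {own G u'} else Q - (Q' - Qn'))"
        have nxe: "nx hs (u,Q') c' = (u', Qn)" unfolding nx_def nxt1_def Qn_def c'e using SQ IH True by simp
        have g: "Qn = Q \<or> (\<exists>k\<in>Q. Qn = Q - {k})"
          using gr IH(4) unfolding Qn_def by auto
        have sim: "step G s1 s2'' hs = (u', Qn)"
          using step_eq[OF SQ] True g IH unfolding s2''_def
          by (simp add: lenhs trs nxe SQ u'_def)
        show ?thesis
          using hists trs nxe sim HRs c'e EV[OF edge] IH gr
          unfolding u'_def[symmetric] Qn_def by (auto simp: hs_def)
      next
        case False
        define u' where "u' = fst s2 (HR n)"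
        have edge: "(u, u') \<in> E G" using legal2_move[OF l2 HRne RQ IH(3)] IH False unfolding u'_def by simp
        define Qn where "Qn = snd s1 hs u'"
        have g: "Qn = Q \<or> (\<exists>k\<in>{1..d G} - Q. Qn = insert k Q)"
          using legal1_grab[OF l1 hsne] SQ IH False unfolding Qn_def by simp
        define Qn' where "Qn' = (if own G u' \<in> Qn \<and> own G u' \<notin> Q' \<and> own G u' \<in> {1..d G}
            then insert (own G u') Q' else Q')"
        have c'e: "c' = (u', Qn')" unfolding c'_def u'_def Qn'_def Qn_def
          using step_eq[OF RQ] False IH by (simp add: s1'_def RQ hs_def)
        have nxe: "nx hs (u,Q') c' = (u', Qn)" unfolding nx_def nxt1_def Qn_def c'e using SQ IH False by simp
        have sim: "step G s1 s2'' hs = (u', Qn)"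
          using step_eq[OF SQ] False edge IH unfolding s2''_def
          by (simp add: lenhs HRs c'e Qn_def SQ)
        have u'V: "u' \<in> V G" using EV[OF edge] .
        show ?thesis
          using hists trs nxe sim HRs c'e u'V rng[OF u'V] IH g
          unfolding Qn'_def by (auto simp: hs_def)
      qed
    qed
    obtain n where "fst (play G s1 s2'' (v,P) n) \<in> T G" using win l2'' by blast
    then show "\<exists>n. fst (play G s1' s2 (v, P') n) \<in> T G"
      using inv[of n] by (auto simp: play_def HR_def c0_def)
  qed
qed


definition nxt2 :: "'v pawn_game \<Rightarrow> 'v strategy \<Rightarrow> 'v config list \<Rightarrow> 'v config \<Rightarrow> 'v config \<Rightarrow> 'v config" where
  "nxt2 G s2 hs c c' = (if own G (fst (last hs)) \<in> snd (last hs)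
     then (fst c', snd s2 hs (fst c'))
     else (fst c', if own G (fst c') \<in> snd c' \<and> own G (fst c') \<notin> snd (last hs)
                   then insert (own G (fst c')) (snd (last hs)) else snd (last hs)))"

lemma part2:
  fixes G :: "'v pawn_game"
  assumes mv: "mvpp_game G" and vV: "v \<in> V G" and sub: "P' \<subseteq> P"
    and mov: "own G v \<in> P \<longleftrightarrow> own G v \<in> P'" and w: "wins2 G (v,P')"
  shows "wins2 G (v,P)"
proof -
  from w obtain s2 where l2: "legal2 G s2"
    and win: "\<forall>s1. legal1 G s1 \<longrightarrow> (\<forall>n. fst (play G s1 s2 (v,P') n) \<notin> T G)"
    by (auto simp: wins2_def)
  have EV: "\<And>a b. (a,b) \<in> E G \<Longrightarrow> b \<in> V G" using mv by (auto simp: mvpp_game_def)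
  have succ: "\<And>a. a \<in> V G \<Longrightarrow> \<exists>b. (a,b) \<in> E G" using mv by (auto simp: mvpp_game_def)
  have rng: "\<And>a. a \<in> V G \<Longrightarrow> own G a \<in> {1..d G}" using mv by (auto simp: mvpp_game_def)
  define nx where "nx = nxt2 G s2"
  define c0 where "c0 = (v,P')"
  define s2' :: "'v strategy" where "s2' = ((\<lambda>h. if (fst (last h), fst s2 (tr nx c0 h)) \<in> E G then fst s2 (tr nx c0 h)
        else (SOME w. (fst (last h), w) \<in> E G)),
     (\<lambda>h u'. if own G u' \<in> snd (last h) \<and> own G u' \<notin> snd s2 (tr nx c0 h) u'
        then snd (last h) - {own G u'} else snd (last h)))"
  have l2': "legal2 G s2'"
    unfolding legal2_def
  proof (intro allI impI conjI)
    fix h v P assume "h \<noteq> []" "last h = (v,P)" "v \<in> V G" "own G v \<notin> P"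
    then show "(v, fst s2' h) \<in> E G" unfolding s2'_def using succ[of v]
      by (auto intro: someI_ex)
  next
    fix h v P u assume "h \<noteq> []" "last h = (v,P)" "v \<in> V G" "own G v \<in> P"
    then show "snd s2' h u = P \<or> (\<exists>k\<in>P. snd s2' h u = P - {k})"
      unfolding s2'_def by auto
  qed
  show ?thesis unfolding wins2_def
  proof (rule exI[of _ s2'], intro conjI allI impI)
    show "legal2 G s2'" by fact
    fix s1 n assume l1: "legal1 G s1"
    define HR where "HR n = hist G s1 s2' (v,P) n" for n
    define s1'' :: "'v strategy" where "s1'' = ((\<lambda>hs. if (fst (last hs), fst (last (HR (length hs)))) \<in> E G
           then fst (last (HR (length hs))) else (SOME w. (fst (last hs), w) \<in> E G)),
       (\<lambda>hs u'. if snd (last (tr nx c0 (HR (length hs)))) = snd (last hs) \<or>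
            (\<exists>k\<in>{1..d G} - snd (last hs). snd (last (tr nx c0 (HR (length hs)))) = insert k (snd (last hs)))
          then snd (last (tr nx c0 (HR (length hs)))) else snd (last hs)))"
    have l1'': "legal1 G s1''"
      unfolding legal1_def
    proof (intro allI impI conjI)
      fix h v P assume "h \<noteq> []" "last h = (v,P)" "v \<in> V G" "own G v \<in> P"
      then show "(v, fst s1'' h) \<in> E G" unfolding s1''_def using succ[of v]
        by (auto intro: someI_ex)
    next
      fix h v P u assume "h \<noteq> []" "last h = (v,P)" "v \<in> V G" "own G v \<notin> P"
      then show "snd s1'' h u = P \<or> (\<exists>k\<in>{1..d G} - P. snd s1'' h u = insert k P)"
        unfolding s1''_def by auto
    qed
    have inv: "hist G s1'' s2 c0 n = tr nx c0 (HR n) \<and>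
       fst (last (tr nx c0 (HR n))) = fst (last (HR n)) \<and> fst (last (HR n)) \<in> V G \<and>
       snd (last (tr nx c0 (HR n))) \<subseteq> snd (last (HR n)) \<and>
       (own G (fst (last (HR n))) \<in> snd (last (tr nx c0 (HR n))) \<longleftrightarrow> own G (fst (last (HR n))) \<in> snd (last (HR n)))" for n
    proof (induction n)
      case 0
      then show ?case using vV sub mov by (simp add: HR_def tr_single c0_def)
    next
      case (Suc n)
      define hs where "hs = tr nx c0 (HR n)"
      obtain u Q where RQ: "last (HR n) = (u,Q)" by fastforce
      obtain x Q' where SQ: "last hs = (x,Q')" by fastforce
      have hsne: "hs \<noteq> []" unfolding hs_def by (rule tr_ne)
      have HRne: "HR n \<noteq> []" unfolding HR_def by (rule hist_ne)
      have lenhs: "length hs = Suc n" unfolding hs_def tr_def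
        by (simp add: length_trn HR_def length_hist)
      have IH: "hist G s1'' s2 c0 n = hs" "x = u" "u \<in> V G" "Q' \<subseteq> Q" "own G u \<in> Q' \<longleftrightarrow> own G u \<in> Q"
        using Suc.IH RQ SQ by (auto simp: hs_def)
      define c' where "c' = step G s1 s2' (HR n)"
      have HRs: "HR (Suc n) = HR n @ [c']" by (simp add: HR_def c'_def)
      have trs: "tr nx c0 (HR (Suc n)) = hs @ [nx hs (u,Q) c']"
        using tr_snoc[OF HRne] RQ by (simp add: HRs hs_def)
      have hists: "hist G s1'' s2 c0 (Suc n) = hs @ [step G s1'' s2 hs]" using IH(1) by simp
      show ?case
      proof (cases "own G u \<in> Q'")
        case True
        define u' where "u' = fst s1 (HR n)"
        have edge: "(u, u') \<in> E G" using legal1_move[OF l1 HRne RQ IH(3)] IH True unfolding u'_def by simp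
        define Qn' where "Qn' = snd s2 hs u'"
        have gr: "Qn' = Q' \<or> (\<exists>k\<in>Q'. Qn' = Q' - {k})"
          using legal2_grab[OF l2 hsne] SQ IH True unfolding Qn'_def by simp
        define Qn where "Qn = (if own G u' \<in> Q \<and> own G u' \<notin> Qn' then Q - {own G u'} else Q)"
        have c'e: "c' = (u', Qn)" unfolding c'_def u'_def Qn'_def Qn_def
          using step_eq[OF RQ] True IH by (simp add: s2'_def RQ hs_def)
        have nxe: "nx hs (u,Q) c' = (u', Qn')" unfolding nx_def nxt2_def Qn'_def c'e using SQ IH True by simp
        have sim: "step G s1'' s2 hs = (u', Qn')"
          using step_eq[OF SQ] True edge IH unfolding s1''_def
          by (simp add: lenhs HRs c'e Qn'_def SQ)
        show ?thesis
          using hists trs nxe sim HRs c'e EV[OF edge] IH gr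
          unfolding Qn_def by (auto simp: hs_def)
      next
        case False
        have edge: "(u, fst s2 hs) \<in> E G" using legal2_move[OF l2 hsne] SQ IH False by simp
        define u' where "u' = fst s2 hs"
        define Qn where "Qn = snd s1 (HR n) u'"
        have c'e: "c' = (u', Qn)" unfolding c'_def u'_def Qn_def
          using step_eq[OF RQ] False IH edge by (simp add: s2'_def RQ hs_def)
        have g: "Qn = Q \<or> (\<exists>k\<in>{1..d G} - Q. Qn = insert k Q)"
          using legal1_grab[OF l1 HRne RQ IH(3)] IH False unfolding Qn_def by simp
        define Qn' where "Qn' = (if own G u' \<in> Qn \<and> own G u' \<notin> Q' then insert (own G u') Q' else Q')"
        have nxe: "nx hs (u,Q) c' = (u', Qn')" unfolding nx_def nxt2_def Qn'_def c'e using SQ IH False by simp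
        have u'V: "u' \<in> V G" using EV[OF edge] unfolding u'_def .
        have g': "Qn' = Q' \<or> (\<exists>k\<in>{1..d G} - Q'. Qn' = insert k Q')"
          using rng[OF u'V] unfolding Qn'_def by auto
        have sim: "step G s1'' s2 hs = (u', Qn')"
          using step_eq[OF SQ] False g' IH unfolding s1''_def
          by (simp add: lenhs trs nxe SQ u'_def)
        show ?thesis
          using hists trs nxe sim HRs c'e u'V IH g
          unfolding Qn'_def by (auto simp: hs_def)
      qed
    qed
    have "fst (play G s1'' s2 (v,P') n) \<notin> T G" using win l1'' by blast
    then show "fst (play G s1 s2' (v, P) n) \<notin> T G"
      using inv[of n] by (auto simp: play_def HR_def c0_def)
  qed
qed

theorem theorem5:
  fixes G :: "'v pawn_game" and v :: 'v and P P' :: "nat set" and j :: nat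
  assumes "mvpp_game G"
    and "v \<in> V G"
    and "P \<subseteq> {1..d G}"
    and "j = own G v"
    and "P' \<subseteq> P"
  shows "((j \<in> P \<longrightarrow> j \<in> P') \<and> wins1 G (v, P) \<longrightarrow> wins1 G (v, P'))
     \<and> ((j \<notin> P' \<longrightarrow> j \<notin> P) \<and> wins2 G (v, P') \<longrightarrow> wins2 G (v, P))"
proof (intro conjI impI)
  assume "(j \<in> P \<longrightarrow> j \<in> P') \<and> wins1 G (v, P)"
  then show "wins1 G (v, P')" using part1[OF assms(1,2,5)] assms(4,5) by blast
next
  assume "(j \<notin> P' \<longrightarrow> j \<notin> P) \<and> wins2 G (v, P')"
  then show "wins2 G (v, P)" using part2[OF assms(1,2,5)] assms(4,5) by blast
qed

end
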